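(* Let $\mathrm{tHC}$ be the twisted associative algebra generated by $S_t$-invariant elements $\mathsf m^{2p}_{\underline t}$ of arity $t\geqslant1$ and homological degree $2p$, for all $t\geqslant1$ and $p\geqslant0$, with $\overline{\mathsf m}_I=\sum_{p\geqslant0}\mathsf m^{2p}_I$, subject to the relations \[ \sum_{\substack{\underline n=I\sqcup J\\ i\in I,\ j\in J}}\overline{\mathsf m}_I\overline{\mathsf m}_J=\sum_{\substack{\underline n=I\sqcup J\\ i\in I,\ j\in J}}\overline{\mathsf m}_J\overline{\mathsf m}_I\qquad(n\geqslant2,\ i\neq j\in\underline n), \] understood homological degree by homological degree. Then for every $n\geqslant1$, each of the two elements \[ \sum_{\substack{I\sqcup J=\underline n\\ j\in J}}\overline{\mathsf m}_I\overline{\mathsf m}_J,\qquad \sum_{\substack{I\sqcup J=\underline n\\ j\in J}}\overline{\mathsf m}_J\overline{\mathsf m}_I \] (sums over decompositions into nonempty $I,J$, taken degree by degree) is independent of the choice of $j\in\underline n$.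
   Context: Work over a field $\Bbbk$ of characteristic zero, homologically graded vector spaces; $\underline n=\{1,\dots,n\}$. A twisted associative algebra is a species with natural associative unital products $\mathcal A(J)\otimes\mathcal A(K)\to\mathcal A(J\sqcup K)$; $\mathsf x_I$ is the relabeling of an $S_t$-invariant element of arity $t$ to a $t$-element set $I$; relations are imposed with all relabelings. Since $\overline{\mathsf m}_t$ is an infinite sum of elements of different degrees, each identity involving these sums is to be read as the family of identities obtained by separating the terms by total homological degree (each involving finitely many terms). *)

theory Defs
  imports Main
begin

text \<open>Concrete model of tHC as a quotient of the free twisted associative algebra.
  A basis word of the free twisted associative algebra on the generators
  m^{2p}_I (I a finite nonempty label set, S_t-invariance meaning the generator
  relabelled to I depends only on I) is a list of pairs (p, I); the word
  [(p1,I1),...,(pk,Ik)] stands for the product m^{2p1}_{I1} ... m^{2pk}_{Ik},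
  which lives in arity I1 \<union> ... \<union> Ik (blocks pairwise disjoint).
  Elements are (finitely supported) coefficient functions on words.\<close>

type_synonym tword = "(nat \<times> nat set) list"

definition valid_word :: "tword \<Rightarrow> bool" where
  "valid_word w \<longleftrightarrow>
     (\<forall>b\<in>set w. finite (snd b) \<and> snd b \<noteq> {}) \<and>
     (\<forall>a<length w. \<forall>c<length w. a \<noteq> c \<longrightarrow> snd (w ! a) \<inter> snd (w ! c) = {})"

definition word_arity :: "tword \<Rightarrow> nat set" where
  "word_arity w = \<Union> (snd ` set w)"

definition bvec :: "tword \<Rightarrow> tword \<Rightarrow> 'k::field" where
  "bvec u w = (if w = u then 1 else 0)"

definition rel_gen :: "tword \<Rightarrow> tword \<Rightarrow> nat set \<Rightarrow> nat \<Rightarrow> nat \<Rightarrow> nat \<Rightarrow> tword \<Rightarrow> 'k::field" where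
  "rel_gen u v T i j d = (\<lambda>w. \<Sum>(I,J,p,q) \<in> {(I,J,p,q). I \<union> J = T \<and> I \<inter> J = {} \<and> i \<in> I \<and> j \<in> J
                                              \<and> 2*p + 2*q = d}.
        bvec (u @ [(p,I),(q,J)] @ v) w - bvec (u @ [(q,J),(p,I)] @ v) w)"

inductive_set tHC_ideal :: "(tword \<Rightarrow> 'k::field) set" where
  zero: "(\<lambda>_. 0) \<in> tHC_ideal"
| add: "a \<in> tHC_ideal \<Longrightarrow> b \<in> tHC_ideal \<Longrightarrow> (\<lambda>w. a w + b w) \<in> tHC_ideal"
| smult: "a \<in> tHC_ideal \<Longrightarrow> (\<lambda>w. c * a w) \<in> tHC_ideal"
| gen: "valid_word u \<Longrightarrow> valid_word v \<Longrightarrow> finite T \<Longrightarrow> i \<in> T \<Longrightarrow> j \<in> T \<Longrightarrow> i \<noteq> j \<Longrightarrow>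
        word_arity u \<inter> word_arity v = {} \<Longrightarrow> word_arity u \<inter> T = {} \<Longrightarrow> word_arity v \<inter> T = {} \<Longrightarrow>
        rel_gen u v T i j d \<in> tHC_ideal"

definition sumIJ :: "nat \<Rightarrow> nat \<Rightarrow> nat \<Rightarrow> tword \<Rightarrow> 'k::field" where
  "sumIJ n j d = (\<lambda>w. \<Sum>(I,J,p,q) \<in> {(I,J,p,q). I \<union> J = {1..n} \<and> I \<inter> J = {} \<and> I \<noteq> {} \<and> j \<in> J
                                           \<and> 2*p + 2*q = d}.
        bvec [(p,I),(q,J)] w)"

definition sumJI :: "nat \<Rightarrow> nat \<Rightarrow> nat \<Rightarrow> tword \<Rightarrow> 'k::field" where
  "sumJI n j d = (\<lambda>w. \<Sum>(I,J,p,q) \<in> {(I,J,p,q). I \<union> J = {1..n} \<and> I \<inter> J = {} \<and> I \<noteq> {} \<and> j \<in> J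
                                           \<and> 2*p + 2*q = d}.
        bvec [(q,J),(p,I)] w)"

end

theory Submission
  imports Defs
begin

lemma sum_bvec_inj:
  assumes "finite S" "inj_on f S"
  shows "(\<Sum>x\<in>S. (bvec (f x) w :: 'k::field)) = (if w \<in> f ` S then 1 else 0)"
proof -
  have "(\<Sum>x\<in>S. (bvec (f x) w :: 'k)) = (\<Sum>u\<in>f ` S. bvec u w)"
    using assms by (simp add: sum.reindex)
  also have "\<dots> = (if w \<in> f ` S then 1 else 0)"
    unfolding bvec_def using assms by (simp add: sum.delta')
  finally show ?thesis .
qed

definition gIJ :: "nat set \<times> nat set \<times> nat \<times> nat \<Rightarrow> tword" where
  "gIJ x = (case x of (I,J,p,q) \<Rightarrow> [(p,I),(q,J)])"
definition gJI :: "nat set \<times> nat set \<times> nat \<times> nat \<Rightarrow> tword" where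
  "gJI x = (case x of (I,J,p,q) \<Rightarrow> [(q,J),(p,I)])"

lemma inj_gIJ: "inj_on gIJ S" by (auto simp: inj_on_def gIJ_def split: prod.splits)
lemma inj_gJI: "inj_on gJI S" by (auto simp: inj_on_def gJI_def split: prod.splits)

lemma fin_tuples:
  assumes "finite T"
  shows "finite {(I,J,p,q). I \<union> J = T \<and> P I J \<and> 2*p + 2*(q::nat) = d}"
proof -
  have "{(I,J,p,q). I \<union> J = T \<and> P I J \<and> 2*p + 2*(q::nat) = d}
        \<subseteq> Pow T \<times> Pow T \<times> {..d} \<times> {..d}" by auto
  moreover have "finite (Pow T \<times> Pow T \<times> {..d} \<times> {..d})" using assms by simp
  ultimately show ?thesis by (rule finite_subset)
qed

lemma sumIJ_eval:
  "(sumIJ n j d w :: 'k::field) = (if w \<in> gIJ ` {(I,J,p,q). I \<union> J = {1..n} \<and> I \<inter> J = {} \<and> I \<noteq> {} \<and> j \<in> J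
                                           \<and> 2*p + 2*q = d} then 1 else 0)"
proof -
  have e: "(\<lambda>(I,J,p,q). (bvec [(p,I),(q,J)] w :: 'k)) = (\<lambda>x. bvec (gIJ x) w)"
    by (auto simp: gIJ_def)
  show ?thesis unfolding sumIJ_def e
    by (rule sum_bvec_inj[OF _ inj_gIJ], rule finite_subset[of _ "Pow {1..n} \<times> Pow {1..n} \<times> {..d} \<times> {..d}"]) auto
qed

lemma sumJI_eval:
  "(sumJI n j d w :: 'k::field) = (if w \<in> gJI ` {(I,J,p,q). I \<union> J = {1..n} \<and> I \<inter> J = {} \<and> I \<noteq> {} \<and> j \<in> J
                                           \<and> 2*p + 2*q = d} then 1 else 0)"
proof -
  have e: "(\<lambda>(I,J,p,q). (bvec [(q,J),(p,I)] w :: 'k)) = (\<lambda>x. bvec (gJI x) w)"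
    by (auto simp: gJI_def)
  show ?thesis unfolding sumJI_def e
    by (rule sum_bvec_inj[OF _ inj_gJI], rule finite_subset[of _ "Pow {1..n} \<times> Pow {1..n} \<times> {..d} \<times> {..d}"]) auto
qed

lemma rel_eval:
  assumes "finite T"
  shows "(rel_gen [] [] T i j d w :: 'k::field) =
    (if w \<in> gIJ ` {(I,J,p,q). I \<union> J = T \<and> I \<inter> J = {} \<and> i \<in> I \<and> j \<in> J \<and> 2*p + 2*q = d} then 1 else 0)
  - (if w \<in> gJI ` {(I,J,p,q). I \<union> J = T \<and> I \<inter> J = {} \<and> i \<in> I \<and> j \<in> J \<and> 2*p + 2*q = d} then 1 else 0)"
proof -
  let ?S = "{(I,J,p,q). I \<union> J = T \<and> I \<inter> J = {} \<and> i \<in> I \<and> j \<in> J \<and> 2*p + 2*(q::nat) = d}"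
  have fin: "finite ?S"
    by (rule finite_subset[of _ "Pow T \<times> Pow T \<times> {..d} \<times> {..d}"]) (use assms in auto)
  have e: "(\<lambda>(I,J,p,q). (bvec ([] @ [(p,I),(q,J)] @ []) w :: 'k) - bvec ([] @ [(q,J),(p,I)] @ []) w)
         = (\<lambda>x. bvec (gIJ x) w - bvec (gJI x) w)"
    by (auto simp: gIJ_def gJI_def)
  show ?thesis unfolding rel_gen_def e sum_subtractf
    by (simp only: sum_bvec_inj[OF fin inj_gIJ] sum_bvec_inj[OF fin inj_gJI])
qed

lemma word_cases:
  obtains "w \<notin> range gIJ" "w \<notin> range gJI" | a A b B where "w = [(a,A),(b,B)]"
proof -
  have "w \<in> range gIJ \<Longrightarrow> \<exists>a A b B. w = [(a,A),(b,B)]" by (auto simp: gIJ_def split: prod.splits)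
  moreover have "w \<in> range gJI \<Longrightarrow> \<exists>a A b B. w = [(a,A),(b,B)]" by (auto simp: gJI_def split: prod.splits)
  ultimately show ?thesis using that by blast
qed

lemma mem_gIJ: "[(a,A),(b,B)] \<in> gIJ ` S \<longleftrightarrow> (A,B,a,b) \<in> S"
proof
  assume "(A,B,a,b) \<in> S" then show "[(a,A),(b,B)] \<in> gIJ ` S"
    by (intro image_eqI[where x="(A,B,a,b)"]) (auto simp: gIJ_def)
qed (auto simp: gIJ_def split: prod.splits)
lemma mem_gJI: "[(a,A),(b,B)] \<in> gJI ` S \<longleftrightarrow> (B,A,b,a) \<in> S"
proof
  assume "(B,A,b,a) \<in> S" then show "[(a,A),(b,B)] \<in> gJI ` S"
    by (intro image_eqI[where x="(B,A,b,a)"]) (auto simp: gJI_def)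
qed (auto simp: gJI_def split: prod.splits)
lemma nr_img: "w \<notin> range f \<Longrightarrow> w \<notin> f ` S" by blast

lemma key_bool0:
  assumes "j \<in> T" "j' \<in> T" "j \<noteq> j'"
  shows "(if A \<union> B = T \<and> A \<inter> B = {} \<and> A \<noteq> {} \<and> j \<in> B \<and> D then 1 else 0)
       - (if A \<union> B = T \<and> A \<inter> B = {} \<and> A \<noteq> {} \<and> j' \<in> B \<and> D then 1 else 0)
     = (if A \<union> B = T \<and> A \<inter> B = {} \<and> j' \<in> A \<and> j \<in> B \<and> D then 1 else 0)
       - (if B \<union> A = T \<and> B \<inter> A = {} \<and> j' \<in> B \<and> j \<in> A \<and> D then (1::'k::field) else 0)"
proof (cases "A \<union> B = T \<and> A \<inter> B = {} \<and> D")
  case False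
  then have "\<not> (B \<union> A = T \<and> B \<inter> A = {} \<and> D)" by (simp add: Un_commute Int_commute)
  then show ?thesis using False by auto
next
  case True
  then have P: "A \<union> B = T" "A \<inter> B = {}" "D" "B \<union> A = T" "B \<inter> A = {}" by auto
  have jB: "j \<in> B \<longleftrightarrow> j \<notin> A" using P(1,2) assms(1) by blast
  have jB': "j' \<in> B \<longleftrightarrow> j' \<notin> A" using P(1,2) assms(2) by blast
  show ?thesis
  proof (cases "j \<in> A")
    case True
    then have "A \<noteq> {}" by blast
    with True show ?thesis using P jB jB' assms(3) by (cases "j' \<in> A") simp_all
  next
    case F: False
    show ?thesis
    proof (cases "j' \<in> A")
      case True
      then have "A \<noteq> {}" by blast
      with True F show ?thesis using P jB jB' by simp
    next
      case False
      with F show ?thesis using P jB jB' by simp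
    qed
  qed
qed

lemma key_bool:
  assumes "j \<in> T" "j' \<in> T" "j \<noteq> j'" "D' = D"
  shows "(if A \<union> B = T \<and> A \<inter> B = {} \<and> A \<noteq> {} \<and> j \<in> B \<and> D then 1 else 0)
       - (if A \<union> B = T \<and> A \<inter> B = {} \<and> A \<noteq> {} \<and> j' \<in> B \<and> D then 1 else 0)
     = (if A \<union> B = T \<and> A \<inter> B = {} \<and> j' \<in> A \<and> j \<in> B \<and> D then 1 else 0)
       - (if B \<union> A = T \<and> B \<inter> A = {} \<and> j' \<in> B \<and> j \<in> A \<and> D' then (1::'k::field) else 0)"
  unfolding assms(4) by (rule key_bool0[OF assms(1-3)])

lemma key_bool2:
  assumes "j \<in> T" "j' \<in> T" "j \<noteq> j'" "D' = D"
  shows "(if B \<union> A = T \<and> B \<inter> A = {} \<and> B \<noteq> {} \<and> j \<in> A \<and> D' then 1 else 0)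
       - (if B \<union> A = T \<and> B \<inter> A = {} \<and> B \<noteq> {} \<and> j' \<in> A \<and> D' then 1 else 0)
     = (-1) * ((if A \<union> B = T \<and> A \<inter> B = {} \<and> j' \<in> A \<and> j \<in> B \<and> D then 1 else 0)
       - (if B \<union> A = T \<and> B \<inter> A = {} \<and> j' \<in> B \<and> j \<in> A \<and> D' then (1::'k::field) else 0))"
proof -
  have e: "(if B \<union> A = T \<and> B \<inter> A = {} \<and> B \<noteq> {} \<and> j \<in> A \<and> D then 1 else 0)
       - (if B \<union> A = T \<and> B \<inter> A = {} \<and> B \<noteq> {} \<and> j' \<in> A \<and> D then 1 else 0)
     = (if B \<union> A = T \<and> B \<inter> A = {} \<and> j' \<in> B \<and> j \<in> A \<and> D then 1 else 0)
       - (if A \<union> B = T \<and> A \<inter> B = {} \<and> j' \<in> A \<and> j \<in> B \<and> D then (1::'k) else 0)"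
    by (rule key_bool0[OF assms(1-3)])
  show ?thesis unfolding assms(4) e by simp
qed

theorem mainTheorem19:
  fixes n j j' d :: nat
  assumes "n \<ge> 1" and "j \<in> {1..n}" and "j' \<in> {1..n}"
  shows "(\<lambda>w. (sumIJ n j d w :: 'k::field_char_0) - sumIJ n j' d w) \<in> tHC_ideal
       \<and> (\<lambda>w. (sumJI n j d w :: 'k::field_char_0) - sumJI n j' d w) \<in> tHC_ideal"
proof (cases "j = j'")
  case True
  then show ?thesis using tHC_ideal.zero by simp
next
  case False
  have R: "(rel_gen [] [] {1..n} j' j d :: tword \<Rightarrow> 'k) \<in> tHC_ideal"
    by (rule tHC_ideal.gen) (use assms False in \<open>auto simp: valid_word_def word_arity_def\<close>)
  have A: "(\<lambda>w. (sumIJ n j d w :: 'k) - sumIJ n j' d w) = rel_gen [] [] {1..n} j' j d"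
  proof
    fix w
    show "(sumIJ n j d w :: 'k) - sumIJ n j' d w = rel_gen [] [] {1..n} j' j d w"
      unfolding sumIJ_eval rel_eval[OF finite_atLeastAtMost]
      apply (cases w rule: word_cases)
      apply (simp add: nr_img)
      apply hypsubst
      apply (simp only: mem_gIJ mem_gJI mem_Collect_eq prod.case)
      apply (rule key_bool)
      using False assms by auto
  qed
  have B: "(\<lambda>w. (sumJI n j d w :: 'k) - sumJI n j' d w) = (\<lambda>w. (-1) * rel_gen [] [] {1..n} j' j d w)"
  proof
    fix w
    show "(sumJI n j d w :: 'k) - sumJI n j' d w = (-1) * rel_gen [] [] {1..n} j' j d w"
      unfolding sumJI_eval rel_eval[OF finite_atLeastAtMost]
      apply (cases w rule: word_cases)
      apply (simp add: nr_img)
      apply hypsubst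
      apply (simp only: mem_gIJ mem_gJI mem_Collect_eq prod.case)
      apply (rule key_bool2)
      using False assms by auto
  qed
  show ?thesis unfolding A B using R tHC_ideal.smult by blast
qed

end
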